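(* Let $N$ be a positive integer, $0<s<1$ with $N>2s$, $\alpha>-2s$, $\overline{C}>0$ and $\lambda>0$. Let $v\in\mathcal{L}_{2s}\cap C^{1,1}_{loc}$ satisfy $v(x)=-v_\lambda(x)$ for $x\in B_\lambda\setminus\{0\}$, and suppose that for a set $\Omega\subseteq B_\lambda\setminus\{0\}$, $$(-\Delta)^s v-\overline{C}|x|^\alpha v\ge 0\ \text{in }\Omega,\qquad v\ge 0\ \text{in }(B_\lambda\setminus\{0\})\setminus\Omega.$$ Then there exists a small $\delta_0>0$ such that $\inf_\Omega v\ge 0$ as long as $\Omega\subseteq\{x\in\mathbb{R}^N:\lambda-\delta_0<|x|<\lambda\}$.
   Context: $(-\Delta)^s u(x)=a_{N,s}\,\mathrm{P.V.}\int_{\mathbb{R}^N}\frac{u(x)-u(y)}{|x-y|^{N+2s}}dy$. $\mathcal{L}_{2s}=\{u : \int_{\mathbb{R}^N}\frac{|u(x)|}{1+|x|^{N+2s}}dx<\infty\}$. $B_\lambda$ is the open ball of radius $\lambda$ centered at $0$. The Kelvin transform is $v_\lambda(x)=\left(\frac{\lambda}{|x|}\right)^{N-2s}v\!\left(\frac{\lambda^2x}{|x|^2}\right)$ for $x\ne0$. *)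

theory Defs
  imports "HOL-Analysis.Analysis" "HOL-Analysis.Gamma_Function"
begin

definition frac_const :: "nat \<Rightarrow> real \<Rightarrow> real" where
  "frac_const N s = 2 powr (2 * s) * s * Gamma (real N / 2 + s)
      / (pi powr (real N / 2) * Gamma (1 - s))"

text \<open>Fractional Laplacian as a principal value integral over R^N = 'a,
  N = DIM('a).\<close>
definition frac_lap :: "real \<Rightarrow> ('a::euclidean_space \<Rightarrow> real) \<Rightarrow> 'a \<Rightarrow> real" where
  "frac_lap s u x = frac_const DIM('a) s *
     Lim (at_right 0) (\<lambda>\<epsilon>. LINT y : {y. dist x y \<ge> \<epsilon>} | lborel.
        (u x - u y) / norm (x - y) powr (real DIM('a) + 2 * s))"

definition L2s :: "real \<Rightarrow> ('a::euclidean_space \<Rightarrow> real) set" where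
  "L2s s = {u. integrable lborel (\<lambda>x. u x / (1 + norm x powr (real DIM('a) + 2 * s)))}"

definition C11_loc :: "('a::euclidean_space \<Rightarrow> real) set" where
  "C11_loc = {u. \<exists>D. (\<forall>x. (u has_derivative (\<lambda>h. D x \<bullet> h)) (at x)) \<and>
      (\<forall>K. compact K \<longrightarrow> (\<exists>L. \<forall>x\<in>K. \<forall>y\<in>K. norm (D x - D y) \<le> L * dist x y))}"

definition kelvin :: "real \<Rightarrow> real \<Rightarrow> ('a::euclidean_space \<Rightarrow> real) \<Rightarrow> 'a \<Rightarrow> real" where
  "kelvin s lam v x = (lam / norm x) powr (real DIM('a) - 2 * s) * v ((lam^2 / (norm x)^2) *\<^sub>R x)"

end

theory Submission
  imports Defs
begin

lemma nn_integral_scale_euclidean: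
  fixes f :: "'a::euclidean_space \<Rightarrow> ennreal"
  assumes [measurable]: "f \<in> borel_measurable borel" and c: "c \<noteq> 0"
  shows "(\<integral>\<^sup>+x. f x \<partial>lborel) = ennreal (\<bar>c\<bar>^DIM('a)) * (\<integral>\<^sup>+x. f (c *\<^sub>R x) \<partial>lborel)"
  by (subst lborel_affine[OF c, of 0])
     (simp add: nn_integral_density nn_integral_distr nn_integral_cmult)

lemma nn_integral_indicator_shift:
  "(\<integral>\<^sup>+s. indicator {0..<1::real} (s + c) \<partial>lborel) = 1"
proof -
  have "(\<integral>\<^sup>+s. indicator {0..<1::real} s \<partial>lborel) = ennreal \<bar>1::real\<bar> * (\<integral>\<^sup>+s. indicator {0..<1::real} (c + 1 * s) \<partial>lborel)"
    by (rule nn_integral_real_affine) auto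
  then show ?thesis by (simp add: add.commute)
qed

lemma polar_formula:
  fixes g :: "'a::euclidean_space \<Rightarrow> ennreal"
  assumes [measurable]: "g \<in> borel_measurable borel" and g0: "g 0 = 0"
  shows "(\<integral>\<^sup>+y. g y \<partial>lborel) = (\<integral>\<^sup>+w. indicator {0..<1} (ln (norm w)) *
      (\<integral>\<^sup>+s. ennreal (exp (- real DIM('a) * s)) * g (exp (-s) *\<^sub>R w) \<partial>lborel) \<partial>lborel)"
proof -
  have "(\<integral>\<^sup>+y. g y \<partial>lborel) = (\<integral>\<^sup>+y. g y * (\<integral>\<^sup>+s. indicator {0..<1::real} (s + ln (norm y)) \<partial>lborel) \<partial>lborel)"
    by (simp add: nn_integral_indicator_shift)
  also have "\<dots> = (\<integral>\<^sup>+y. (\<integral>\<^sup>+s. g y * indicator {0..<1::real} (s + ln (norm y)) \<partial>lborel) \<partial>lborel)"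
    by (intro nn_integral_cong) (simp add: nn_integral_cmult)
  also have "\<dots> = (\<integral>\<^sup>+s. (\<integral>\<^sup>+y. g y * indicator {0..<1::real} (s + ln (norm y)) \<partial>lborel) \<partial>lborel)"
    by (rule pair_sigma_finite.Fubini'[symmetric]) (simp_all add: pair_sigma_finite_def lborel.sigma_finite_measure_axioms)
  also have "\<dots> = (\<integral>\<^sup>+s. ennreal (exp (- real DIM('a) * s)) * (\<integral>\<^sup>+w. g (exp (-s) *\<^sub>R w) * indicator {0..<1::real} (ln (norm w)) \<partial>lborel) \<partial>lborel)"
  proof (intro nn_integral_cong)
    fix s :: real
    have "(\<integral>\<^sup>+y. g y * indicator {0..<1::real} (s + ln (norm y)) \<partial>lborel) =
       ennreal (\<bar>exp (-s)\<bar>^DIM('a)) * (\<integral>\<^sup>+w. g (exp (-s) *\<^sub>R w) * indicator {0..<1::real} (s + ln (norm (exp (-s) *\<^sub>R w))) \<partial>lborel)"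
      by (rule nn_integral_scale_euclidean) auto
    also have "(\<integral>\<^sup>+w. g (exp (-s) *\<^sub>R w) * indicator {0..<1::real} (s + ln (norm (exp (-s) *\<^sub>R w))) \<partial>lborel)
       = (\<integral>\<^sup>+w. g (exp (-s) *\<^sub>R w) * indicator {0..<1::real} (ln (norm w)) \<partial>lborel)"
    proof (intro nn_integral_cong)
      fix w :: 'a
      show "g (exp (-s) *\<^sub>R w) * indicator {0..<1::real} (s + ln (norm (exp (-s) *\<^sub>R w))) =
            g (exp (-s) *\<^sub>R w) * indicator {0..<1::real} (ln (norm w))"
      proof (cases "w = 0")
        case True then show ?thesis by (simp add: g0)
      next
        case False
        then have "ln (norm (exp (-s) *\<^sub>R w)) = -s + ln (norm w)"
          by (simp add: ln_mult)
        then show ?thesis by simp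
      qed
    qed
    also have "\<bar>exp (-s)\<bar>^DIM('a) = exp (- real DIM('a) * s)"
      by (simp add: exp_of_nat_mult[symmetric] mult.commute)
    finally show "(\<integral>\<^sup>+y. g y * indicator {0..<1::real} (s + ln (norm y)) \<partial>lborel) = ennreal (exp (- real DIM('a) * s)) * (\<integral>\<^sup>+w. g (exp (-s) *\<^sub>R w) * indicator {0..<1::real} (ln (norm w)) \<partial>lborel)" .
  qed
  also have "\<dots> = (\<integral>\<^sup>+s. (\<integral>\<^sup>+w. ennreal (exp (- real DIM('a) * s)) * g (exp (-s) *\<^sub>R w) * indicator {0..<1::real} (ln (norm w)) \<partial>lborel) \<partial>lborel)"
    by (intro nn_integral_cong) (simp add: nn_integral_cmult mult.assoc)
  also have "\<dots> = (\<integral>\<^sup>+w. (\<integral>\<^sup>+s. ennreal (exp (- real DIM('a) * s)) * g (exp (-s) *\<^sub>R w) * indicator {0..<1::real} (ln (norm w)) \<partial>lborel) \<partial>lborel)"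
    by (rule pair_sigma_finite.Fubini') (simp_all add: pair_sigma_finite_def lborel.sigma_finite_measure_axioms)
  also have "\<dots> = (\<integral>\<^sup>+w. indicator {0..<1} (ln (norm w)) *
      (\<integral>\<^sup>+s. ennreal (exp (- real DIM('a) * s)) * g (exp (-s) *\<^sub>R w) \<partial>lborel) \<partial>lborel)"
  proof (intro nn_integral_cong)
    fix w :: 'a
    have "(\<integral>\<^sup>+s. ennreal (exp (- real DIM('a) * s)) * g (exp (-s) *\<^sub>R w) * indicator {0..<1::real} (ln (norm w)) \<partial>lborel)
       = (\<integral>\<^sup>+s. indicator {0..<1::real} (ln (norm w)) * (ennreal (exp (- real DIM('a) * s)) * g (exp (-s) *\<^sub>R w)) \<partial>lborel)"
      by (intro nn_integral_cong) (simp add: mult.commute)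
    also have "\<dots> = indicator {0..<1::real} (ln (norm w)) * (\<integral>\<^sup>+s. ennreal (exp (- real DIM('a) * s)) * g (exp (-s) *\<^sub>R w) \<partial>lborel)"
      by (rule nn_integral_cmult) simp
    finally show "(\<integral>\<^sup>+s. ennreal (exp (- real DIM('a) * s)) * g (exp (-s) *\<^sub>R w) * indicator {0..<1::real} (ln (norm w)) \<partial>lborel) = indicator {0..<1} (ln (norm w)) *
      (\<integral>\<^sup>+s. ennreal (exp (- real DIM('a) * s)) * g (exp (-s) *\<^sub>R w) \<partial>lborel)" .
  qed
  finally show ?thesis .
qed

lemma exp_tail1:
  assumes "a > 0"
  shows "(\<integral>\<^sup>+s. ennreal (exp (-a* s)) * indicator {c..} s \<partial>lborel) < top"
proof -
  have "(\<integral>\<^sup>+s. ennreal (exp (-a* s)) * indicator {c..} s \<partial>lborel) = ennreal (exp (-a*c)/a)"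
    by (rule nn_integral_has_integral_lebesgue'[OF _ has_integral_exp_minus_to_infinity[OF assms]]) simp
  then show ?thesis by simp
qed

lemma exp_tail2:
  assumes "a > 0"
  shows "(\<integral>\<^sup>+s. ennreal (exp (a* s)) * indicator {..c} s \<partial>lborel) < top"
proof -
  have "(\<integral>\<^sup>+s. ennreal (exp (a* s)) * indicator {..c} s \<partial>lborel) =
      ennreal \<bar>-1::real\<bar> * (\<integral>\<^sup>+s. ennreal (exp (a * (0 + (-1) * s))) * indicator {..c} (0 + (-1) * s) \<partial>lborel)"
    by (rule nn_integral_real_affine) auto
  also have "\<dots> = (\<integral>\<^sup>+s. ennreal (exp (-a* s)) * indicator {-c..} s \<partial>lborel)"
    by (simp, intro nn_integral_cong) (auto simp: indicator_def)
  finally show ?thesis using exp_tail1[OF assms] by simp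
qed

lemma radial_finite:
  fixes h :: "'a::euclidean_space \<Rightarrow> ennreal"
  assumes [measurable]: "h \<in> borel_measurable borel" and h0: "h 0 = 0"
    and B: "\<And>w. 1 \<le> norm w \<Longrightarrow> norm w < exp 1 \<Longrightarrow>
       (\<integral>\<^sup>+s. ennreal (exp (- real DIM('a) * s)) * h (exp (-s) *\<^sub>R w) \<partial>lborel) \<le> Bd"
    and Bfin: "Bd < top"
  shows "(\<integral>\<^sup>+y. h y \<partial>lborel) < top"
proof -
  have "(\<integral>\<^sup>+y. h y \<partial>lborel) = (\<integral>\<^sup>+w. indicator {0..<1} (ln (norm w)) *
      (\<integral>\<^sup>+s. ennreal (exp (- real DIM('a) * s)) * h (exp (-s) *\<^sub>R w) \<partial>lborel) \<partial>lborel)"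
    by (rule polar_formula) (simp_all add: h0)
  also have "\<dots> \<le> (\<integral>\<^sup>+w. Bd * indicator (cball (0::'a) (exp 1)) w \<partial>lborel)"
  proof (rule nn_integral_mono)
    fix w :: 'a
    show "indicator {0..<1} (ln (norm w)) *
      (\<integral>\<^sup>+s. ennreal (exp (- real DIM('a) * s)) * h (exp (-s) *\<^sub>R w) \<partial>lborel) \<le> Bd * indicator (cball 0 (exp 1)) w"
    proof (cases "w = 0")
      case True then show ?thesis by (simp add: h0)
    next
      case False
      show ?thesis
      proof (cases "0 \<le> ln (norm w) \<and> ln (norm w) < 1")
        case True
        have q: "norm w > 0" using \<open>w \<noteq> 0\<close> by simp
        have "1 \<le> norm w" using True ln_ge_zero_iff[OF q] by simp
        moreover have "norm w < exp 1"
          using True exp_less_cancel_iff[of "ln (norm w)" 1] exp_ln[OF q] by simp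
        ultimately have "1 \<le> norm w" "norm w < exp 1" by auto
        then show ?thesis using B[of w] True by (simp add: indicator_def)
      next
        case False then show ?thesis by (auto simp: indicator_def)
      qed
    qed
  qed
  also have "\<dots> = Bd * emeasure lborel (cball (0::'a) (exp 1))"
    by (rule nn_integral_cmult_indicator) simp
  also have "\<dots> < top" using Bfin
    using emeasure_lborel_cball_finite[of "0::'a" "exp 1"] by (simp add: ennreal_mult_less_top)
  finally show ?thesis .
qed

lemma ln_scaled': "w \<noteq> 0 \<Longrightarrow> ln (exp (-s) * norm w) = ln (norm w) - s"
  using ln_mult_pos[of "exp (-s)" "norm w"] by simp

lemma ln_scaled: "w \<noteq> 0 \<Longrightarrow> ln (norm (exp (-s) *\<^sub>R w)) = -s + ln (norm w)"
  using ln_scaled' by simp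

lemma powr_scaled': "w \<noteq> 0 \<Longrightarrow> (exp (-s) * norm w) powr q = exp (q * (ln (norm w) - s))"
proof -
  assume w: "w \<noteq> 0"
  then have "exp (-s) * norm w \<noteq> 0" by simp
  then have "(exp (-s) * norm w) powr q = exp (q * ln (exp (-s) * norm w))"
    by (simp add: powr_def)
  then show ?thesis using ln_scaled'[OF w] by simp
qed

lemma powr_scaled: "w \<noteq> 0 \<Longrightarrow> norm (exp (-s) *\<^sub>R w) powr q = exp (q * (-s + ln (norm w)))"
  using powr_scaled'[of w s q] by simp

lemma tail0:
  fixes p \<epsilon> :: real
  assumes p: "p > real DIM('a::euclidean_space)" and e: "\<epsilon> > 0"
  shows "(\<integral>\<^sup>+z. ennreal (indicator {z::'a. \<epsilon> \<le> norm z} z * norm z powr (-p)) \<partial>lborel) < top"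
proof (rule radial_finite)
  show "(\<lambda>z::'a. ennreal (indicator {z::'a. \<epsilon> \<le> norm z} z * norm z powr (-p))) \<in> borel_measurable borel"
    by measurable
  show "ennreal (indicator {z::'a. \<epsilon> \<le> norm z} 0 * norm (0::'a) powr (-p)) = 0" by simp
  show "(\<integral>\<^sup>+s. ennreal (exp ((p - real DIM('a)) * s)) * indicator {..1 - ln \<epsilon>} s \<partial>lborel) < top"
    using exp_tail2[of "p - real DIM('a)"] p by simp
  fix w :: 'a
  assume w1: "1 \<le> norm w" and w2: "norm w < exp 1"
  have w0: "w \<noteq> 0" using w1 by auto
  have lnw: "0 \<le> ln (norm w)" "ln (norm w) < 1"
    using w1 w2 by (simp, metis exp_ln less_le_trans ln_less_cancel_iff ln_exp zero_less_one exp_gt_zero w1 norm_ge_zero)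
  show "(\<integral>\<^sup>+s. ennreal (exp (- real DIM('a) * s)) * ennreal (indicator {z::'a. \<epsilon> \<le> norm z} (exp (-s) *\<^sub>R w) * norm (exp (-s) *\<^sub>R w) powr (-p)) \<partial>lborel)
     \<le> (\<integral>\<^sup>+s. ennreal (exp ((p - real DIM('a)) * s)) * indicator {..1 - ln \<epsilon>} s \<partial>lborel)"
  proof (rule nn_integral_mono)
    fix s :: real
    have "exp (- real DIM('a) * s) * (indicator {z::'a. \<epsilon> \<le> norm z} (exp (-s) *\<^sub>R w) * norm (exp (-s) *\<^sub>R w) powr (-p))
        \<le> exp ((p - real DIM('a)) * s) * indicator {..1 - ln \<epsilon>} s"
    proof (cases "\<epsilon> \<le> norm (exp (-s) *\<^sub>R w)")
      case True
      then have "ln \<epsilon> \<le> ln (norm (exp (-s) *\<^sub>R w))" using e by simp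
      then have "s \<le> 1 - ln \<epsilon>" using lnw by (simp add: ln_scaled'[OF w0])
      moreover have "exp (- real DIM('a) * s) * norm (exp (-s) *\<^sub>R w) powr (-p) \<le> exp ((p - real DIM('a)) * s)"
      proof -
        have "exp (- real DIM('a) * s) * norm (exp (-s) *\<^sub>R w) powr (-p) = exp (- real DIM('a) * s) * exp ((-p) * (-s + ln (norm w)))"
          by (simp only: powr_scaled[OF w0])
        also have "\<dots> = exp (- real DIM('a) * s + (-p) * (-s + ln (norm w)))"
          by (simp only: exp_add)
        also have "\<dots> \<le> exp ((p - real DIM('a)) * s)"
          using lnw p by (simp add: algebra_simps)
        finally show ?thesis .
      qed
      ultimately show ?thesis using True by (simp add: indicator_def)
    next
      case False then show ?thesis by (simp add: indicator_def)
    qed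
    then show "ennreal (exp (- real DIM('a) * s)) * ennreal (indicator {z::'a. \<epsilon> \<le> norm z} (exp (-s) *\<^sub>R w) * norm (exp (-s) *\<^sub>R w) powr (-p))
       \<le> ennreal (exp ((p - real DIM('a)) * s)) * indicator {..1 - ln \<epsilon>} s"
      by (simp add: ennreal_mult'[symmetric] ennreal_indicator[symmetric] ennreal_leI del: ennreal_indicator)
  qed
qed

lemma local0:
  fixes \<beta> r :: real
  assumes b: "\<beta> < real DIM('a::euclidean_space)" and r: "r > 0"
  shows "(\<integral>\<^sup>+z. ennreal (indicator {z::'a. norm z < r} z * norm z powr (-\<beta>)) \<partial>lborel) < top"
proof (rule radial_finite)
  show "(\<lambda>z::'a. ennreal (indicator {z::'a. norm z < r} z * norm z powr (-\<beta>))) \<in> borel_measurable borel"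
    by measurable
  show "ennreal (indicator {z::'a. norm z < r} 0 * norm (0::'a) powr (-\<beta>)) = 0" by simp
  have "(\<integral>\<^sup>+s. ennreal (exp (-(real DIM('a) - \<beta>) * s)) * indicator {-ln r..} s \<partial>lborel) < top"
    using exp_tail1[of "real DIM('a) - \<beta>"] b by simp
  then show "(\<integral>\<^sup>+s. ennreal (exp \<bar>\<beta>\<bar>) * (ennreal (exp (-(real DIM('a) - \<beta>) * s)) * indicator {-ln r..} s) \<partial>lborel) < top"
    by (simp add: nn_integral_cmult ennreal_mult_less_top)
  fix w :: 'a
  assume w1: "1 \<le> norm w" and w2: "norm w < exp 1"
  have w0: "w \<noteq> 0" using w1 by auto
  have lnw: "0 \<le> ln (norm w)" "ln (norm w) < 1"
    using w1 w2 by (simp, metis exp_ln less_le_trans ln_less_cancel_iff ln_exp zero_less_one exp_gt_zero w1 norm_ge_zero)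
  show "(\<integral>\<^sup>+s. ennreal (exp (- real DIM('a) * s)) * ennreal (indicator {z::'a. norm z < r} (exp (-s) *\<^sub>R w) * norm (exp (-s) *\<^sub>R w) powr (-\<beta>)) \<partial>lborel)
     \<le> (\<integral>\<^sup>+s. ennreal (exp \<bar>\<beta>\<bar>) * (ennreal (exp (-(real DIM('a) - \<beta>) * s)) * indicator {-ln r..} s) \<partial>lborel)"
  proof (rule nn_integral_mono)
    fix s :: real
    have "exp (- real DIM('a) * s) * (indicator {z::'a. norm z < r} (exp (-s) *\<^sub>R w) * norm (exp (-s) *\<^sub>R w) powr (-\<beta>))
        \<le> exp \<bar>\<beta>\<bar> * (exp (-(real DIM('a) - \<beta>) * s) * indicator {-ln r..} s)"
    proof (cases "norm (exp (-s) *\<^sub>R w) < r")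
      case True
      then have "ln (norm (exp (-s) *\<^sub>R w)) < ln r" using r w0 by simp
      then have "-ln r \<le> s" using lnw by (simp add: ln_scaled'[OF w0])
      moreover have "exp (- real DIM('a) * s) * norm (exp (-s) *\<^sub>R w) powr (-\<beta>) \<le> exp \<bar>\<beta>\<bar> * exp (-(real DIM('a) - \<beta>) * s)"
      proof -
        have "exp (- real DIM('a) * s) * norm (exp (-s) *\<^sub>R w) powr (-\<beta>) = exp (- real DIM('a) * s) * exp ((-\<beta>) * (-s + ln (norm w)))"
          by (simp only: powr_scaled[OF w0])
        also have "\<dots> = exp (- real DIM('a) * s + (-\<beta>) * (-s + ln (norm w)))"
          by (simp only: exp_add)
        also have "\<dots> \<le> exp (\<bar>\<beta>\<bar> + (-(real DIM('a) - \<beta>) * s))"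
        proof -
          have "-\<beta> * ln (norm w) \<le> \<bar>\<beta>\<bar>"
          proof -
            have "\<bar>\<beta>\<bar> * ln (norm w) \<le> \<bar>\<beta>\<bar> * 1"
              using lnw by (intro mult_left_mono) simp_all
            then have "\<bar>-\<beta> * ln (norm w)\<bar> \<le> \<bar>\<beta>\<bar> * 1"
              using lnw by (simp add: abs_mult)
            then show ?thesis by linarith
          qed
          then show ?thesis by (simp add: algebra_simps)
        qed
        also have "\<dots> = exp \<bar>\<beta>\<bar> * exp (-(real DIM('a) - \<beta>) * s)" by (simp add: exp_add)
        finally show ?thesis .
      qed
      ultimately show ?thesis using True by (simp add: indicator_def)
    next
      case False then show ?thesis by (simp add: indicator_def)
    qed
    then show "ennreal (exp (- real DIM('a) * s)) * ennreal (indicator {z::'a. norm z < r} (exp (-s) *\<^sub>R w) * norm (exp (-s) *\<^sub>R w) powr (-\<beta>))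
       \<le> ennreal (exp \<bar>\<beta>\<bar>) * (ennreal (exp (-(real DIM('a) - \<beta>) * s)) * indicator {-ln r..} s)"
      by (simp add: ennreal_mult'[symmetric] ennreal_indicator[symmetric] ennreal_leI del: ennreal_indicator)
  qed
qed

lemma integrable_translate:
  fixes F :: "'a::euclidean_space \<Rightarrow> real"
  assumes [measurable]: "F \<in> borel_measurable borel" and "integrable lborel F"
  shows "integrable lborel (\<lambda>y. F (y - c))"
proof -
  have "integrable (distr lborel borel ((+) c)) (\<lambda>y. F (y - c))"
    using assms by (subst integrable_distr_eq) simp_all
  then show ?thesis by (simp add: lborel_distr_plus)
qed

lemma integrable_from_nn:
  fixes F :: "'a::euclidean_space \<Rightarrow> real"
  assumes [measurable]: "F \<in> borel_measurable borel" and "\<And>x. 0 \<le> F x"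
    and "(\<integral>\<^sup>+z. ennreal (F z) \<partial>lborel) < top"
  shows "integrable lborel F"
  by (rule integrableI_bounded) (use assms in simp_all)

lemma tail_integrable:
  fixes p \<epsilon> :: real and x0 :: "'a::euclidean_space"
  assumes p: "p > real DIM('a)" and e: "\<epsilon> > 0"
  shows "integrable lborel (\<lambda>y. indicator {y. \<epsilon> \<le> norm (x0 - y)} y * norm (x0 - y) powr (-p))"
proof -
  let ?F = "\<lambda>z::'a. indicator {z::'a. \<epsilon> \<le> norm z} z * norm z powr (-p)"
  have "integrable lborel ?F"
    by (rule integrable_from_nn) (simp_all add: tail0[OF p e])
  then have "integrable lborel (\<lambda>y. ?F (y - x0))" by (rule integrable_translate[rotated]) simp
  then show ?thesis by (simp add: norm_minus_commute indicator_def)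
qed

lemma local_integrable:
  fixes \<beta> r :: real and x0 :: "'a::euclidean_space"
  assumes b: "\<beta> < real DIM('a)" and r: "r > 0"
  shows "integrable lborel (\<lambda>y. indicator {y. norm (x0 - y) < r} y * norm (x0 - y) powr (-\<beta>))"
proof -
  let ?F = "\<lambda>z::'a. indicator {z::'a. norm z < r} z * norm z powr (-\<beta>)"
  have "integrable lborel ?F"
    by (rule integrable_from_nn) (simp_all add: local0[OF b r])
  then have "integrable lborel (\<lambda>y. ?F (y - x0))" by (rule integrable_translate[rotated]) simp
  then show ?thesis by (simp add: norm_minus_commute indicator_def)
qed

lemma weight_bound:
  fixes x0 y :: "'a::real_normed_vector"
  assumes p: "p > 0" and e: "\<epsilon> > 0" and d: "\<epsilon> \<le> norm (x0 - y)"
  shows "1 + norm y powr p \<le> (\<epsilon> powr (-p) + (1 + norm x0 / \<epsilon>) powr p) * norm (x0 - y) powr p"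
proof -
  let ?d = "norm (x0 - y)"
  have d0: "?d > 0" using d e by linarith
  have "1 = \<epsilon> powr (-p) * \<epsilon> powr p" using e by (simp add: powr_minus field_simps)
  also have "\<dots> \<le> \<epsilon> powr (-p) * ?d powr p"
    using e d p by (intro mult_left_mono powr_mono2) auto
  finally have 1: "1 \<le> \<epsilon> powr (-p) * ?d powr p" .
  have "norm y \<le> ?d + norm x0" using norm_triangle_ineq4[of x0 "x0 - y"] by simp
  also have "norm x0 \<le> norm x0 / \<epsilon> * ?d"
  proof -
    have "norm x0 / \<epsilon> * \<epsilon> \<le> norm x0 / \<epsilon> * ?d" using d e by (intro mult_left_mono) auto
    then show ?thesis using e by simp
  qed
  finally have "norm y \<le> (1 + norm x0 / \<epsilon>) * ?d" by (simp add: algebra_simps)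
  then have "norm y powr p \<le> ((1 + norm x0 / \<epsilon>) * ?d) powr p"
    using p by (intro powr_mono2) auto
  also have "\<dots> = (1 + norm x0 / \<epsilon>) powr p * ?d powr p"
    using e by (subst powr_mult) auto
  finally show ?thesis using 1 by (simp add: algebra_simps)
qed

lemma F_integrable:
  fixes v :: "'a::euclidean_space \<Rightarrow> real" and x0 :: 'a
  assumes p: "p > real DIM('a)" and e: "\<epsilon> > 0"
    and [measurable]: "v \<in> borel_measurable borel"
    and L: "integrable lborel (\<lambda>x. v x / (1 + norm x powr p))"
  shows "set_integrable lborel {y. \<epsilon> \<le> dist x0 y} (\<lambda>y. (v x0 - v y) / norm (x0 - y) powr p)"
  unfolding set_integrable_def
proof (rule Bochner_Integration.integrable_bound)
  define c where "c = \<epsilon> powr (-p) + (1 + norm x0 / \<epsilon>) powr p"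
  let ?T = "\<lambda>y. indicator {y. \<epsilon> \<le> norm (x0 - y)} y * norm (x0 - y) powr (-p)"
  let ?f = "\<lambda>y. \<bar>v x0\<bar> * ?T y + c * \<bar>v y / (1 + norm y powr p)\<bar>"
  show "integrable lborel ?f"
  proof -
    have t: "integrable lborel ?T" by (rule tail_integrable[OF p e])
    have a: "integrable lborel (\<lambda>y. \<bar>v y / (1 + norm y powr p)\<bar>)" by (rule integrable_abs[OF L])
    show ?thesis
      by (intro Bochner_Integration.integrable_add Bochner_Integration.integrable_mult_right t a)
  qed
  show "(\<lambda>y. indicator {y. \<epsilon> \<le> dist x0 y} y *\<^sub>R ((v x0 - v y) / norm (x0 - y) powr p)) \<in> borel_measurable lborel"
    by measurable
  have p0: "p > 0" using p by (smt (verit) of_nat_0_le_iff)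
  show "AE y in lborel. norm (indicator {y. \<epsilon> \<le> dist x0 y} y *\<^sub>R ((v x0 - v y) / norm (x0 - y) powr p)) \<le> norm (?f y)"
  proof (intro AE_I2)
    fix y :: 'a
    have T0: "0 \<le> ?T y" by simp
    show "norm (indicator {y. \<epsilon> \<le> dist x0 y} y *\<^sub>R ((v x0 - v y) / norm (x0 - y) powr p)) \<le> norm (?f y)"
    proof (cases "\<epsilon> \<le> dist x0 y")
      case False
      then show ?thesis by simp
    next
      case True
      let ?d = "norm (x0 - y)"
      have dd: "\<epsilon> \<le> ?d" using True by (simp add: dist_norm)
      have d0: "?d > 0" using dd e by linarith
      have dp: "?d powr p > 0" using d0 by simp
      have w: "1 + norm y powr p \<le> c * ?d powr p"
        unfolding c_def by (rule weight_bound[OF p0 e dd])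
      have w0: "1 + norm y powr p > 0" by (smt (verit) powr_ge_zero)
      have c0: "c > 0" using w w0 dp by (smt (verit) mult_nonpos_nonneg)
      have "norm (indicator {y. \<epsilon> \<le> dist x0 y} y *\<^sub>R ((v x0 - v y) / ?d powr p)) = \<bar>v x0 - v y\<bar> / ?d powr p"
        using True dp by simp
      also have "\<dots> \<le> (\<bar>v x0\<bar> + \<bar>v y\<bar>) / ?d powr p"
        using dp by (intro divide_right_mono) auto
      also have "\<dots> = \<bar>v x0\<bar> * ?d powr (-p) + \<bar>v y\<bar> / ?d powr p"
        by (simp add: add_divide_distrib powr_minus divide_inverse distrib_right)
      also have "\<bar>v y\<bar> / ?d powr p \<le> c * (\<bar>v y\<bar> / (1 + norm y powr p))"
      proof -
        have "\<bar>v y\<bar> * (1 + norm y powr p) \<le> \<bar>v y\<bar> * (c * ?d powr p)"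
          using w by (intro mult_left_mono) auto
        then show ?thesis using dp w0
          by (simp add: field_simps)
      qed
      finally have "norm (indicator {y. \<epsilon> \<le> dist x0 y} y *\<^sub>R ((v x0 - v y) / ?d powr p))
          \<le> \<bar>v x0\<bar> * ?T y + c * \<bar>v y / (1 + norm y powr p)\<bar>"
        using dd w0 by (simp add: abs_divide)
      also have "\<dots> \<le> norm (?f y)" by simp
      finally show ?thesis .
    qed
  qed
qed

definition invm :: "real \<Rightarrow> 'a::euclidean_space \<Rightarrow> 'a" where
  "invm lam z = (lam^2 / (norm z)^2) *\<^sub>R z"

definition jac :: "real \<Rightarrow> 'a::euclidean_space \<Rightarrow> real" where
  "jac lam z = (lam / norm z) ^ (2 * DIM('a))"

lemma invm_measurable[measurable]: "invm lam \<in> borel_measurable borel"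
  unfolding invm_def by measurable

lemma jac_measurable[measurable]: "(jac lam :: 'a::euclidean_space \<Rightarrow> real) \<in> borel_measurable borel"
  unfolding jac_def by measurable

lemma exp_N_pow: "exp (- real n * s) = exp (-s) ^ n"
  by (simp add: exp_of_nat_mult[symmetric])

lemma inversion_pointwise:
  fixes w :: "'a::euclidean_space"
  assumes lam: "lam > 0" and w: "w \<noteq> 0"
  defines "a \<equiv> 2 * ln (norm w / lam)"
  shows "exp (-(a - s)) = lam^2 * exp s / (norm w)^2"
    and "invm lam (exp (-s) *\<^sub>R w) = exp (-(a - s)) *\<^sub>R w"
    and "exp (-s) ^ DIM('a) * jac lam (exp (-s) *\<^sub>R w) = exp (-(a - s)) ^ DIM('a)"
proof -
  have q: "norm w > 0" using w by simp
  have ea: "exp (-a) = (lam / norm w)^2"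
  proof -
    have "exp (-a) = exp (2 * ln (lam / norm w))"
      unfolding a_def using q lam by (simp add: ln_div)
    also have "\<dots> = exp (ln (lam / norm w)) ^ 2"
      by (metis exp_of_nat_mult of_nat_numeral)
    also have "\<dots> = (lam / norm w)^2" using q lam by simp
    finally show ?thesis .
  qed
  have "exp (-(a - s)) = exp s * exp (-a)" by (simp add: exp_add[symmetric])
  then show e: "exp (-(a - s)) = lam^2 * exp s / (norm w)^2"
    by (simp add: ea power_divide)
  show "invm lam (exp (-s) *\<^sub>R w) = exp (-(a - s)) *\<^sub>R w"
    unfolding invm_def e using q
    by (simp add: power_mult_distrib exp_minus field_simps power2_eq_square)
  have "exp (-s) ^ DIM('a) * jac lam (exp (-s) *\<^sub>R w) = (exp (-s) * ((lam / (exp (-s) * norm w))^2)) ^ DIM('a)"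
    unfolding jac_def by (simp add: power_mult power_mult_distrib)
  also have "exp (-s) * ((lam / (exp (-s) * norm w))^2) = exp (-(a - s))"
    unfolding e using q by (simp add: exp_minus field_simps power2_eq_square)
  finally show "exp (-s) ^ DIM('a) * jac lam (exp (-s) *\<^sub>R w) = exp (-(a - s)) ^ DIM('a)" .
qed

lemma inversion_nn:
  fixes g :: "'a::euclidean_space \<Rightarrow> ennreal"
  assumes [measurable]: "g \<in> borel_measurable borel" and lam: "lam > 0"
  shows "(\<integral>\<^sup>+z. g (invm lam z) * ennreal (jac lam z) * indicator (-{0}) z \<partial>lborel)
       = (\<integral>\<^sup>+y. g y * indicator (-{0}) y \<partial>lborel)"
proof -
  let ?G = "\<lambda>z. g (invm lam z) * ennreal (jac lam z) * indicator (-{0}) z"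
  let ?g = "\<lambda>y. g y * indicator (-{0}) y :: ennreal"
  have eq: "(\<integral>\<^sup>+s. ennreal (exp (- real DIM('a) * s)) * ?G (exp (-s) *\<^sub>R w) \<partial>lborel)
          = (\<integral>\<^sup>+s. ennreal (exp (- real DIM('a) * s)) * ?g (exp (-s) *\<^sub>R w) \<partial>lborel)" for w :: 'a
  proof (cases "w = 0")
    case True then show ?thesis by simp
  next
    case False
    define a where "a = 2 * ln (norm w / lam)"
    let ?h = "\<lambda>s. ennreal (exp (- real DIM('a) * s)) * ?g (exp (-s) *\<^sub>R w)"
    have "(\<integral>\<^sup>+s. ennreal (exp (- real DIM('a) * s)) * ?G (exp (-s) *\<^sub>R w) \<partial>lborel)
        = (\<integral>\<^sup>+s. ?h (a + (-1) * s) \<partial>lborel)"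
    proof (intro nn_integral_cong)
      fix s :: real
      note P = inversion_pointwise[OF lam False, of s, folded a_def]
      have "ennreal (exp (- real DIM('a) * s)) * ?G (exp (-s) *\<^sub>R w)
          = ennreal (exp (-s) ^ DIM('a) * jac lam (exp (-s) *\<^sub>R w)) * g (invm lam (exp (-s) *\<^sub>R w))"
        using False unfolding exp_N_pow by (simp add: ennreal_mult' jac_def mult_ac)
      also have "\<dots> = ennreal (exp (-(a - s)) ^ DIM('a)) * g (exp (-(a - s)) *\<^sub>R w)"
        by (simp only: P(2) P(3))
      also have "\<dots> = ?h (a - s)"
        using False by (simp only: exp_N_pow) (simp add: mult_ac)
      also have "a - s = a + (-1) * s" by simp
      finally show "ennreal (exp (- real DIM('a) * s)) * ?G (exp (-s) *\<^sub>R w) = ?h (a + (-1) * s)" .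
    qed
    also have "\<dots> = (\<integral>\<^sup>+s. ?h s \<partial>lborel)"
      using nn_integral_real_affine[of ?h "-1" a] by simp
    finally show ?thesis .
  qed
  have "(\<integral>\<^sup>+z. ?G z \<partial>lborel) = (\<integral>\<^sup>+w. indicator {0..<1} (ln (norm w)) *
      (\<integral>\<^sup>+s. ennreal (exp (- real DIM('a) * s)) * ?G (exp (-s) *\<^sub>R w) \<partial>lborel) \<partial>lborel)"
    by (rule polar_formula) auto
  also have "\<dots> = (\<integral>\<^sup>+w. indicator {0..<1} (ln (norm w)) *
      (\<integral>\<^sup>+s. ennreal (exp (- real DIM('a) * s)) * ?g (exp (-s) *\<^sub>R w) \<partial>lborel) \<partial>lborel)"
    by (simp only: eq)
  also have "\<dots> = (\<integral>\<^sup>+z. ?g z \<partial>lborel)"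
    by (rule polar_formula[symmetric]) auto
  finally show ?thesis .
qed

lemma norm_invm: "norm (invm lam z) = lam^2 / norm z" if "lam > 0" for z :: "'a::euclidean_space"
  using that unfolding invm_def by (cases "z = 0") (auto simp: power2_eq_square)

lemma invm_in_U: "lam > 0 \<Longrightarrow> z \<noteq> 0 \<Longrightarrow> (lam < norm (invm lam z)) \<longleftrightarrow> norm z < lam"
  for z :: "'a::euclidean_space"
  by (simp add: norm_invm field_simps power2_eq_square)

lemma jac_nonneg: "lam > 0 \<Longrightarrow> 0 \<le> jac lam z"
  unfolding jac_def by simp

lemma inversion_measure:
  fixes lam :: real
  assumes lam: "lam > 0"
  defines "S \<equiv> ball (0::'a::euclidean_space) lam - {0}" and "U \<equiv> {y::'a. lam < norm y}"
  shows "distr (density lborel (\<lambda>z. ennreal (indicator S z * jac lam z))) lborel (invm lam)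
       = density lborel (\<lambda>y. ennreal (indicator U y))"
proof (rule measure_eqI)
  show "sets (distr (density lborel (\<lambda>z. ennreal (indicator S z * jac lam z))) lborel (invm lam)) =
    sets (density lborel (\<lambda>y. ennreal (indicator U y)))" by simp
  have [measurable]: "S \<in> sets borel" "U \<in> sets borel" unfolding S_def U_def by auto
  fix A assume "A \<in> sets (distr (density lborel (\<lambda>z. ennreal (indicator S z * jac lam z))) lborel (invm lam))"
  then have A[measurable]: "A \<in> sets borel" by simp
  let ?g = "\<lambda>y. indicator A y * ennreal (indicator U y)"
  have pre: "invm lam -` A \<in> sets borel"
    using measurable_sets[OF invm_measurable A, of lam] by simp
  have "emeasure (distr (density lborel (\<lambda>z. ennreal (indicator S z * jac lam z))) lborel (invm lam)) A
      = (\<integral>\<^sup>+z. ennreal (indicator S z * jac lam z) * indicator (invm lam -` A) z \<partial>lborel)"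
    by (subst emeasure_distr) (simp_all add: emeasure_density pre nn_integral_set_ennreal mult.commute)
  also have "\<dots> = (\<integral>\<^sup>+z. ?g (invm lam z) * ennreal (jac lam z) * indicator (-{0}) z \<partial>lborel)"
  proof (intro nn_integral_cong)
    fix z :: 'a
    show "ennreal (indicator S z * jac lam z) * indicator (invm lam -` A) z =
        ?g (invm lam z) * ennreal (jac lam z) * indicator (-{0}) z"
    proof (cases "z = 0")
      case True then show ?thesis by (simp add: S_def)
    next
      case False
      then show ?thesis using invm_in_U[OF lam False] jac_nonneg[OF lam]
        by (auto simp: S_def U_def indicator_def)
    qed
  qed
  also have "\<dots> = (\<integral>\<^sup>+y. ?g y * indicator (-{0}) y \<partial>lborel)"
    by (rule inversion_nn) (simp_all add: lam)
  also have "\<dots> = (\<integral>\<^sup>+y. ennreal (indicator U y) * indicator A y \<partial>lborel)"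
    using lam by (intro nn_integral_cong) (auto simp: U_def indicator_def)
  also have "\<dots> = emeasure (density lborel (\<lambda>y. ennreal (indicator U y))) A"
    by (simp add: emeasure_density)
  finally show "emeasure (distr (density lborel (\<lambda>z. ennreal (indicator S z * jac lam z))) lborel (invm lam)) A =
       emeasure (density lborel (\<lambda>y. ennreal (indicator U y))) A" .
qed

lemma inversion_integral:
  fixes f :: "'a::euclidean_space \<Rightarrow> real"
  assumes lam: "lam > 0" and f[measurable]: "f \<in> borel_measurable borel"
    and fi: "set_integrable lborel {y. lam < norm y} f"
  shows "set_integrable lborel (ball 0 lam - {0}) (\<lambda>z. jac lam z * f (invm lam z))"
    and "(LINT y:{y. lam < norm y}|lborel. f y) = (LINT z:(ball 0 lam - {0})|lborel. jac lam z * f (invm lam z))"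
proof -
  define S where "S = ball (0::'a) lam - {0}"
  define U where "U = {y::'a. lam < norm y}"
  have [measurable]: "S \<in> sets borel" "U \<in> sets borel" unfolding S_def U_def by auto
  have M: "distr (density lborel (\<lambda>z. ennreal (indicator S z * jac lam z))) lborel (invm lam)
       = density lborel (\<lambda>y. ennreal (indicator U y))"
    unfolding S_def U_def by (rule inversion_measure[OF lam])
  have nn: "AE x in lborel. 0 \<le> indicator S x * jac lam x"
    by (intro AE_I2) (simp add: jac_nonneg[OF lam])
  have nnU: "AE x in lborel. 0 \<le> (indicator U x :: real)" by simp
  have i1: "integrable (density lborel (\<lambda>y. ennreal (indicator U y))) f"
    using fi unfolding U_def[symmetric] set_integrable_def
    by (subst integrable_density) (simp_all add: nnU)
  then have "integrable (distr (density lborel (\<lambda>z. ennreal (indicator S z * jac lam z))) lborel (invm lam)) f"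
    by (simp add: M)
  then have "integrable (density lborel (\<lambda>z. ennreal (indicator S z * jac lam z))) (\<lambda>z. f (invm lam z))"
    by (subst (asm) integrable_distr_eq) simp_all
  then have "integrable lborel (\<lambda>z. (indicator S z * jac lam z) *\<^sub>R f (invm lam z))"
    by (subst (asm) integrable_density) (simp_all add: nn)
  then show "set_integrable lborel (ball 0 lam - {0}) (\<lambda>z. jac lam z * f (invm lam z))"
    unfolding set_integrable_def S_def by (simp add: mult.assoc)
  have "(LINT y:{y. lam < norm y}|lborel. f y) = integral\<^sup>L (density lborel (\<lambda>y. ennreal (indicator U y))) f"
    unfolding set_lebesgue_integral_def U_def by (subst integral_density) (simp_all add: nnU[unfolded U_def])
  also have "\<dots> = integral\<^sup>L (distr (density lborel (\<lambda>z. ennreal (indicator S z * jac lam z))) lborel (invm lam)) f"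
    by (simp add: M)
  also have "\<dots> = integral\<^sup>L (density lborel (\<lambda>z. ennreal (indicator S z * jac lam z))) (\<lambda>z. f (invm lam z))"
    by (subst integral_distr) simp_all
  also have "\<dots> = integral\<^sup>L lborel (\<lambda>z. (indicator S z * jac lam z) *\<^sub>R f (invm lam z))"
    by (subst integral_density) (simp_all add: nn)
  also have "\<dots> = (LINT z:(ball 0 lam - {0})|lborel. jac lam z * f (invm lam z))"
    unfolding set_lebesgue_integral_def S_def by (simp add: mult.assoc)
  finally show "(LINT y:{y. lam < norm y}|lborel. f y) = (LINT z:(ball 0 lam - {0})|lborel. jac lam z * f (invm lam z))" .
qed

lemma norm_diff_sq:
  fixes a b :: "'a::real_inner"
  shows "(norm (a - c *\<^sub>R b))^2 = (norm a)^2 - 2 * c * (a \<bullet> b) + c^2 * (norm b)^2"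
  unfolding power2_norm_eq_inner by (simp add: inner_diff inner_commute algebra_simps power2_eq_square)

lemma Q_sq:
  fixes x0 z :: "'a::euclidean_space"
  assumes lam: "lam > 0" and z: "z \<noteq> 0"
  shows "(norm z * norm (x0 - invm lam z) / lam)^2 = (norm (x0 - z))^2 + (lam^2 - (norm x0)^2) * (lam^2 - (norm z)^2) / lam^2"
proof -
  have nz: "norm z > 0" using z by simp
  have a: "(norm (x0 - invm lam z))^2 = (norm x0)^2 - 2 * (lam^2 / (norm z)^2) * (x0 \<bullet> z) + (lam^2 / (norm z)^2)^2 * (norm z)^2"
    unfolding invm_def by (rule norm_diff_sq)
  have b: "(norm (x0 - z))^2 = (norm x0)^2 - 2 * (x0 \<bullet> z) + (norm z)^2"
    using norm_diff_sq[of x0 1 z] by simp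
  show ?thesis
    using nz lam unfolding power_mult_distrib power_divide a b
    by (simp add: field_simps power2_eq_square)
qed

lemma pointwise_H:
  fixes v :: "'a::euclidean_space \<Rightarrow> real" and x0 z :: 'a
  assumes lam: "lam > 0" and s: "0 < s" and N: "2 * s < real DIM('a)"
    and p: "p = real DIM('a) + 2 * s"
    and z: "z \<noteq> 0" "norm z < lam"
    and x0: "norm x0 < lam" "lam < 2 * norm x0"
    and m: "v x0 < 0" "v x0 \<le> v z"
    and anti: "v z = - kelvin s lam v z"
    and e: "\<not> \<epsilon> \<le> dist x0 z \<Longrightarrow> v z \<le> 0"
  shows "indicator {y. \<epsilon> \<le> dist x0 y} z * ((v x0 - v z) / norm (x0 - z) powr p)
      + jac lam z * ((v x0 - v (invm lam z)) / norm (x0 - invm lam z) powr p)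
     \<le> v x0 * (3 * (lam - norm x0)) powr (-p) * indicator (ball x0 (lam - norm x0)) z"
proof -
  define m where "m = v x0"
  define \<rho> where "\<rho> = lam - norm x0"
  define t where "t = lam / norm z"
  define R where "R = t powr (real DIM('a) - 2 * s)"
  define Q where "Q = norm z * norm (x0 - invm lam z) / lam"
  define K where "K = norm (x0 - z)"
  define P where "P = (lam^2 - (norm x0)^2) * (lam^2 - (norm z)^2) / lam^2"
  have nz: "norm z > 0" using z by simp
  have t1: "t > 1" unfolding t_def using nz z by simp
  have R1: "R \<ge> 1" unfolding R_def using t1 N by (intro ge_one_powr_ge_zero) auto
  have P0: "P > 0"
  proof -
    have "(norm x0)^2 < lam^2" using x0 by (intro power_strict_mono) auto
    moreover have "(norm z)^2 < lam^2" using z by (intro power_strict_mono) auto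
    ultimately show ?thesis using lam unfolding P_def by (intro divide_pos_pos mult_pos_pos) auto
  qed
  have QQ: "Q^2 = K^2 + P" unfolding Q_def K_def P_def by (rule Q_sq[OF lam z(1)])
  have Q0: "Q \<ge> 0" unfolding Q_def using lam by simp
  have "Q \<noteq> 0"
  proof
    assume "Q = 0"
    then have "K^2 + P = 0" using QQ by simp
    moreover have "K^2 \<ge> 0" by simp
    ultimately show False using P0 by linarith
  qed
  then have Qpos: "Q > 0" using Q0 by simp
  have KQ: "K \<le> Q"
  proof -
    have "K^2 \<le> Q^2" using QQ P0 by simp
    then show ?thesis using Q0 K_def by (simp add: power2_le_iff_abs_le)
  qed
  have vi: "v (invm lam z) = - v z / R"
  proof -
    have "v z = - (R * v (invm lam z))"
      using anti unfolding kelvin_def R_def t_def invm_def by simp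
    then show ?thesis using R1 by (simp add: field_simps)
  qed
  have ninv: "norm (x0 - invm lam z) = t * Q"
    unfolding t_def Q_def using nz lam by simp
  have jacR: "jac lam z = R * t powr p"
  proof -
    have "t powr (real (2 * DIM('a))) = t ^ (2 * DIM('a))"
      using t1 by (intro powr_realpow) simp
    then have "jac lam z = t powr (real (2 * DIM('a)))"
      unfolding jac_def t_def by simp
    also have "\<dots> = t powr ((real DIM('a) - 2 * s) + p)" using p by simp
    also have "\<dots> = R * t powr p" unfolding R_def by (simp add: powr_add)
    finally show ?thesis .
  qed
  have ident: "jac lam z * ((m - v (invm lam z)) / norm (x0 - invm lam z) powr p) = (m * R + v z) * Q powr (-p)"
  proof -
    have "(t * Q) powr p = t powr p * Q powr p" using t1 Qpos by (simp add: powr_mult)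
    then show ?thesis
      unfolding jacR vi ninv using R1 t1 Qpos by (simp add: powr_minus field_simps)
  qed
  have Qp: "Q powr (-p) > 0" using Qpos by simp
  have mR: "m * R \<le> m" using R1 m unfolding m_def by (simp add: mult_le_cancel_left1)
  have main: "indicator {y. \<epsilon> \<le> dist x0 y} z * ((m - v z) / K powr p) + (m * R + v z) * Q powr (-p) \<le> m * Q powr (-p)"
  proof (cases "\<epsilon> \<le> dist x0 z")
    case True
    have K0: "K > 0 \<or> K = 0" unfolding K_def by auto
    have "(m - v z) / K powr p \<le> (m - v z) * Q powr (-p)"
    proof (cases "K = 0")
      case True then have "z = x0" unfolding K_def by simp
      then show ?thesis unfolding m_def by simp
    next
      case False
      then have Kp: "K > 0" unfolding K_def by simp
      have "Q powr (-p) \<le> K powr (-p)"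
        using Kp KQ p N s by (intro powr_mono2') auto
      then have "(m - v z) * K powr (-p) \<le> (m - v z) * Q powr (-p)"
        using m unfolding m_def by (intro mult_left_mono_neg) auto
      then show ?thesis by (simp add: powr_minus divide_inverse)
    qed
    then have "indicator {y. \<epsilon> \<le> dist x0 y} z * ((m - v z) / K powr p) + (m * R + v z) * Q powr (-p)
        \<le> (m - v z) * Q powr (-p) + (m * R + v z) * Q powr (-p)" using True by simp
    also have "\<dots> = (m + m * R) * Q powr (-p)" by (simp add: algebra_simps)
    also have "\<dots> \<le> m * Q powr (-p)"
      using Qp m R1 unfolding m_def by (intro mult_right_mono) (auto simp: mult_nonpos_nonneg)
    finally show ?thesis .
  next
    case False
    then have "v z \<le> 0" using e by simp
    then have "m * R + v z \<le> m" using mR by simp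
    then show ?thesis using False Qp by (simp add: mult_right_mono)
  qed
  have fin: "m * Q powr (-p) \<le> m * (3 * \<rho>) powr (-p) * indicator (ball x0 \<rho>) z"
  proof (cases "z \<in> ball x0 \<rho>")
    case False then show ?thesis using m Qp unfolding m_def by (simp add: mult_nonpos_nonneg)
  next
    case True
    then have zr: "K < \<rho>" unfolding K_def \<rho>_def by (simp add: dist_norm)
    have r0: "\<rho> > 0" unfolding \<rho>_def using x0 by simp
    have "P \<le> 8 * \<rho>^2"
    proof -
      have a: "lam^2 - (norm x0)^2 \<le> 2 * lam * \<rho>"
      proof -
        have "lam^2 - (norm x0)^2 = \<rho> * (lam + norm x0)" unfolding \<rho>_def by (simp add: power2_eq_square algebra_simps)
        also have "\<dots> \<le> \<rho> * (2 * lam)" using r0 x0 by (intro mult_left_mono) auto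
        finally show ?thesis by (simp add: mult_ac)
      qed
      have nzK: "norm x0 \<le> norm z + K" unfolding K_def using norm_triangle_ineq4[of x0 z] norm_triangle_sub[of x0 z] by (simp add: norm_minus_commute)
      have b: "lam^2 - (norm z)^2 \<le> 4 * lam * \<rho>"
      proof -
        have "lam - norm z < 2 * \<rho>" using nzK zr unfolding \<rho>_def by simp
        moreover have "lam^2 - (norm z)^2 = (lam - norm z) * (lam + norm z)" by (simp add: power2_eq_square algebra_simps)
        moreover have "lam + norm z \<le> 2 * lam" using z by simp
        moreover have "(lam - norm z) * (lam + norm z) \<le> (2 * \<rho>) * (2 * lam)"
          using calculation z lam by (intro mult_mono) auto
        ultimately show ?thesis by (simp add: mult_ac)
      qed
      have a0: "0 \<le> lam^2 - (norm x0)^2" using x0 by (simp add: abs_le_square_iff power_mono)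
      have "P \<le> (2 * lam * \<rho>) * (4 * lam * \<rho>) / lam^2"
      proof -
        have "0 \<le> lam^2 - (norm z)^2" using z by (simp add: abs_le_square_iff power_mono)
        moreover have "0 \<le> 2 * lam * \<rho>" using r0 lam by simp
        ultimately show ?thesis
          unfolding P_def using a b a0 lam by (intro divide_right_mono mult_mono) auto
      qed
      also have "\<dots> = 8 * \<rho>^2" using lam by (simp add: field_simps power2_eq_square)
      finally show ?thesis .
    qed
    moreover have "K^2 \<le> \<rho>^2" using zr unfolding K_def by (intro power_mono) auto
    ultimately have "Q^2 \<le> (3 * \<rho>)^2" using QQ by (simp add: power_mult_distrib)
    then have Q3: "Q \<le> 3 * \<rho>" using r0 Q0 power2_le_iff_abs_le[of "3 * \<rho>" Q] by simp
    have "(3 * \<rho>) powr (-p) \<le> Q powr (-p)"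
      using Q3 Qpos p N s by (intro powr_mono2') auto
    then show ?thesis using True m unfolding m_def by (simp add: mult_left_mono_neg)
  qed
  show ?thesis using main fin ident
    unfolding m_def[symmetric] \<rho>_def[symmetric] K_def by linarith
qed

lemma key_bound:
  fixes v :: "'a::euclidean_space \<Rightarrow> real" and x0 :: 'a
  assumes lam: "lam > 0" and s: "0 < s" and N: "2 * s < real DIM('a)"
    and vb[measurable]: "v \<in> borel_measurable borel"
    and L2: "integrable lborel (\<lambda>x. v x / (1 + norm x powr (real DIM('a) + 2 * s)))"
    and anti: "\<forall>x\<in>ball 0 lam - {0}. v x = - kelvin s lam v x"
    and sph: "\<forall>y. norm y = lam \<longrightarrow> v y = 0"
    and x0: "norm x0 < lam" "lam < 2 * norm x0"
    and m: "v x0 < 0" "\<forall>y\<in>ball 0 lam. v x0 \<le> v y"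
    and e: "0 < \<epsilon>" "\<epsilon> < lam - norm x0" "\<forall>y\<in>ball x0 \<epsilon>. v y \<le> 0"
  shows "(LINT y:{y. \<epsilon> \<le> dist x0 y}|lborel. (v x0 - v y) / norm (x0 - y) powr (real DIM('a) + 2 * s))
     \<le> v x0 * (3 * (lam - norm x0)) powr (-(real DIM('a) + 2 * s)) * measure lborel (ball x0 (lam - norm x0))"
proof -
  define p where "p = real DIM('a) + 2 * s"
  define F where "F = (\<lambda>y. (v x0 - v y) / norm (x0 - y) powr p)"
  define E where "E = {y::'a. \<epsilon> \<le> dist x0 y}"
  define B where "B = ball (0::'a) lam"
  define U where "U = {y::'a. lam < norm y}"
  define Sp where "Sp = {y::'a. norm y = lam}"
  define \<rho> where "\<rho> = lam - norm x0"
  define c where "c = v x0 * (3 * \<rho>) powr (-p)"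
  have [measurable]: "E \<in> sets borel" "B \<in> sets borel" "U \<in> sets borel" "Sp \<in> sets borel"
    unfolding E_def B_def U_def Sp_def by auto
  have Fm[measurable]: "F \<in> borel_measurable borel" unfolding F_def by measurable
  have pN: "p > real DIM('a)" unfolding p_def using s by simp
  have FE: "set_integrable lborel E F"
    unfolding E_def F_def by (rule F_integrable[OF pN e(1) vb L2[folded p_def]])
  have far: "y \<in> E" if "lam \<le> norm y" for y
  proof -
    have "norm y - norm x0 \<le> norm (x0 - y)" using norm_triangle_ineq3[of y x0] by (simp add: norm_minus_commute)
    then show ?thesis unfolding E_def dist_norm using that e by simp
  qed
  have UE: "U \<subseteq> E" unfolding U_def using far by auto
  have SE: "Sp \<subseteq> E" unfolding Sp_def using far by auto
  have FEB: "set_integrable lborel (E \<inter> B) F" by (rule set_integrable_subset[OF FE]) auto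
  have FU: "set_integrable lborel U F" by (rule set_integrable_subset[OF FE _ UE]) auto
  have FS: "set_integrable lborel Sp F" by (rule set_integrable_subset[OF FE _ SE]) auto
  have split: "indicator E y *\<^sub>R F y = indicator (E \<inter> B) y *\<^sub>R F y + indicator U y *\<^sub>R F y + indicator Sp y *\<^sub>R F y" for y
    using far[of y] by (cases "norm y < lam"; cases "lam < norm y") (auto simp: B_def U_def Sp_def indicator_def)
  have "(LINT y:E|lborel. F y) = (LINT y:(E \<inter> B)|lborel. F y) + (LINT y:U|lborel. F y) + (LINT y:Sp|lborel. F y)"
    using FEB FU FS unfolding set_lebesgue_integral_def set_integrable_def split
    by (simp add: Bochner_Integration.integral_add)
  also have "(LINT y:Sp|lborel. F y) \<le> 0"
  proof -
    have "0 \<le> integral\<^sup>L lborel (\<lambda>y. - (indicator Sp y *\<^sub>R F y))"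
    proof (rule integral_nonneg_AE, intro AE_I2)
      fix y :: 'a
      have "F y \<le> 0" if "y \<in> Sp"
        using that sph m(1) unfolding Sp_def F_def by (simp add: divide_nonpos_nonneg)
      then show "0 \<le> - (indicator Sp y *\<^sub>R F y)" by (auto simp: indicator_def)
    qed
    then show ?thesis unfolding set_lebesgue_integral_def by simp
  qed
  also have "(LINT y:U|lborel. F y) = (LINT z:(B - {0})|lborel. jac lam z * F (invm lam z))"
    unfolding U_def B_def by (rule inversion_integral(2)[OF lam Fm FU[unfolded U_def]])
  finally have step1: "(LINT y:E|lborel. F y) \<le> (LINT y:(E \<inter> B)|lborel. F y) + (LINT z:(B - {0})|lborel. jac lam z * F (invm lam z))"
    by simp
  have FI: "set_integrable lborel (B - {0}) (\<lambda>z. jac lam z * F (invm lam z))"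
    unfolding B_def by (rule inversion_integral(1)[OF lam Fm FU[unfolded U_def]])
  have ball_sub: "ball x0 \<rho> \<subseteq> B"
  proof
    fix z assume "z \<in> ball x0 \<rho>"
    then have "norm (x0 - z) < \<rho>" by (simp add: dist_norm)
    moreover have "norm z \<le> norm x0 + norm (x0 - z)" using norm_triangle_ineq4[of x0 "x0 - z"] by simp
    ultimately show "z \<in> B" unfolding B_def \<rho>_def by simp
  qed
  have bint: "integrable lborel (\<lambda>z. c * indicator (ball x0 \<rho>) z)"
    using emeasure_lborel_ball_finite[of x0 \<rho>] by (intro Bochner_Integration.integrable_mult_right integrable_real_indicator) auto
  have "(LINT y:(E \<inter> B)|lborel. F y) + (LINT z:(B - {0})|lborel. jac lam z * F (invm lam z))
      = integral\<^sup>L lborel (\<lambda>z. indicator (E \<inter> B) z *\<^sub>R F z + indicator (B - {0}) z *\<^sub>R (jac lam z * F (invm lam z)))"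
    using FEB FI unfolding set_lebesgue_integral_def set_integrable_def
    by (simp add: Bochner_Integration.integral_add)
  also have "\<dots> \<le> integral\<^sup>L lborel (\<lambda>z. c * indicator (ball x0 \<rho>) z)"
  proof (rule integral_mono_AE)
    show "integrable lborel (\<lambda>z. indicator (E \<inter> B) z *\<^sub>R F z + indicator (B - {0}) z *\<^sub>R (jac lam z * F (invm lam z)))"
      using FEB FI unfolding set_integrable_def by (rule Bochner_Integration.integrable_add)
    show "integrable lborel (\<lambda>z. c * indicator (ball x0 \<rho>) z)" by (rule bint)
    show "AE z in lborel. indicator (E \<inter> B) z *\<^sub>R F z + indicator (B - {0}) z *\<^sub>R (jac lam z * F (invm lam z)) \<le> c * indicator (ball x0 \<rho>) z"
      using AE_lborel_singleton[of 0]
    proof eventually_elim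
      fix z :: 'a assume z0: "z \<noteq> 0"
      show "indicator (E \<inter> B) z *\<^sub>R F z + indicator (B - {0}) z *\<^sub>R (jac lam z * F (invm lam z)) \<le> c * indicator (ball x0 \<rho>) z"
      proof (cases "z \<in> B")
        case False
        then have "z \<notin> ball x0 \<rho>" using ball_sub by auto
        then show ?thesis using False by simp
      next
        case True
        then have zl: "norm z < lam" unfolding B_def by simp
        have "indicator E z * F z + jac lam z * F (invm lam z) \<le> c * indicator (ball x0 \<rho>) z"
          unfolding F_def c_def \<rho>_def E_def
        proof (rule pointwise_H[where v=v and z=z and \<epsilon>=\<epsilon>, OF lam s N p_def z0 zl x0 m(1)])
          show "v x0 \<le> v z" using m(2) True unfolding B_def by simp
          show "v z = - kelvin s lam v z" using anti True z0 unfolding B_def by simp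
          show "v z \<le> 0" if "\<not> \<epsilon> \<le> dist x0 z" using e(3) that by simp
        qed
        then show ?thesis using True z0 by (simp add: indicator_def)
      qed
    qed
  qed
  also have "\<dots> = c * measure lborel (ball x0 \<rho>)" by simp
  finally show ?thesis using step1 unfolding c_def \<rho>_def p_def F_def E_def by simp
qed

lemma taylor_min:
  fixes v :: "'a::euclidean_space \<Rightarrow> real"
  assumes vC: "v \<in> C11_loc" and r: "r > 0" and mn: "\<forall>y\<in>ball x0 r. v x0 \<le> v y"
  shows "\<exists>L\<ge>0. \<forall>y\<in>ball x0 r. v y - v x0 \<le> L * (norm (y - x0))^2"
proof -
  obtain D where Dd: "\<And>x. (v has_derivative (\<lambda>h. D x \<bullet> h)) (at x)"
    and Lip: "\<And>K. compact K \<Longrightarrow> \<exists>L. \<forall>x\<in>K. \<forall>y\<in>K. norm (D x - D y) \<le> L * dist x y"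
    using vC unfolding C11_loc_def by blast
  have "(\<lambda>h. D x0 \<bullet> h) = (\<lambda>h. 0)"
    by (rule differential_zero_maxmin[of x0 "ball x0 r" v]) (use r Dd mn in auto)
  then have "D x0 \<bullet> D x0 = 0" by meson
  then have D0: "D x0 = 0" by simp
  obtain L0 where L0: "\<forall>x\<in>cball x0 r. \<forall>y\<in>cball x0 r. norm (D x - D y) \<le> L0 * dist x y"
    using Lip[of "cball x0 r"] by auto
  define L where "L = max L0 0"
  have L: "\<forall>x\<in>cball x0 r. \<forall>y\<in>cball x0 r. norm (D x - D y) \<le> L * dist x y"
    using L0 unfolding L_def by (smt (verit) mult_right_mono zero_le_dist)
  show ?thesis
  proof (intro exI[of _ L] conjI ballI)
    show "0 \<le> L" unfolding L_def by simp
    fix y assume y: "y \<in> ball x0 r"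
    define d where "d = norm (y - x0)"
    have dr: "d < r" using y unfolding d_def by (simp add: dist_norm norm_minus_commute)
    have "norm (v y - v x0) \<le> (L * d) * norm (y - x0)"
    proof (rule differentiable_bound[where S = "cball x0 d" and f' = "\<lambda>x h. D x \<bullet> h"])
      show "convex (cball x0 d)" by simp
      show "(v has_derivative (\<lambda>h. D x \<bullet> h)) (at x within cball x0 d)" for x
        by (rule has_derivative_at_withinI[OF Dd])
      fix x assume x: "x \<in> cball x0 d"
      have "onorm (\<lambda>h. D x \<bullet> h) \<le> norm (D x) * onorm (\<lambda>h::'a. h)"
        using onorm_inner_right[of "\<lambda>h::'a. h" "D x"] by simp
      also have "\<dots> = norm (D x - D x0)" by (simp add: onorm_id D0)
      also have "\<dots> \<le> L * dist x x0"
      proof -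
        have "x \<in> cball x0 r" "x0 \<in> cball x0 r" using x dr r by auto
        then show ?thesis using L by blast
      qed
      also have "\<dots> \<le> L * d" using x unfolding L_def by (intro mult_left_mono) (auto simp: dist_commute)
      finally show "onorm (\<lambda>h. D x \<bullet> h) \<le> L * d" .
    next
      show "y \<in> cball x0 d" unfolding d_def by (simp add: dist_norm norm_minus_commute)
      show "x0 \<in> cball x0 d" unfolding d_def by simp
    qed
    then show "v y - v x0 \<le> L * (norm (y - x0))^2"
      unfolding d_def by (simp add: power2_eq_square mult_ac)
  qed
qed

lemma frac_const_pos: "0 < s \<Longrightarrow> s < 1 \<Longrightarrow> frac_const N s > 0"
  unfolding frac_const_def by (intro divide_pos_pos mult_pos_pos Gamma_real_pos) (auto simp: add_pos_nonneg)

lemma frac_lap_bound: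
  fixes v :: "'a::euclidean_space \<Rightarrow> real" and x0 :: 'a
  assumes lam: "lam > 0" and s: "0 < s" "s < 1" and N: "2 * s < real DIM('a)"
    and vC: "v \<in> C11_loc"
    and vb[measurable]: "v \<in> borel_measurable borel"
    and L2: "integrable lborel (\<lambda>x. v x / (1 + norm x powr (real DIM('a) + 2 * s)))"
    and anti: "\<forall>x\<in>ball 0 lam - {0}. v x = - kelvin s lam v x"
    and sph: "\<forall>y. norm y = lam \<longrightarrow> v y = 0"
    and x0: "norm x0 < lam" "lam < 2 * norm x0"
    and m: "v x0 < 0" "\<forall>y\<in>ball 0 lam. v x0 \<le> v y"
    and e1: "0 < \<epsilon>1" "\<epsilon>1 < lam - norm x0" "\<forall>y\<in>ball x0 \<epsilon>1. v y \<le> 0"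
  shows "frac_lap s v x0 \<le> frac_const DIM('a) s *
     (v x0 * (3 * (lam - norm x0)) powr (-(real DIM('a) + 2 * s)) * measure lborel (ball x0 (lam - norm x0)))"
proof -
  define p where "p = real DIM('a) + 2 * s"
  define F where "F = (\<lambda>y. (v x0 - v y) / norm (x0 - y) powr p)"
  define bd where "bd = v x0 * (3 * (lam - norm x0)) powr (-(real DIM('a) + 2 * s)) * measure lborel (ball x0 (lam - norm x0))"
  define I where "I = (\<lambda>\<epsilon>. LINT y : {y. dist x0 y \<ge> \<epsilon>} | lborel. (v x0 - v y) / norm (x0 - y) powr (real DIM('a) + 2 * s))"
  have Fm[measurable]: "F \<in> borel_measurable borel" unfolding F_def by measurable
  have pN: "p > real DIM('a)" unfolding p_def using s by simp
  have p2: "p - 2 < real DIM('a)" unfolding p_def using s by simp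
  have ballB: "ball x0 \<epsilon>1 \<subseteq> ball 0 lam"
  proof
    fix z assume "z \<in> ball x0 \<epsilon>1"
    then have "norm (x0 - z) < \<epsilon>1" by (simp add: dist_norm)
    moreover have "norm z \<le> norm x0 + norm (x0 - z)" using norm_triangle_ineq4[of x0 "x0 - z"] by simp
    ultimately show "z \<in> ball 0 lam" using e1 by simp
  qed
  obtain Lb where Lb: "Lb \<ge> 0" "\<forall>y\<in>ball x0 \<epsilon>1. v y - v x0 \<le> Lb * (norm (y - x0))^2"
    using taylor_min[OF vC e1(1)] m(2) ballB by blast
  define E1 where "E1 = {y::'a. \<epsilon>1 \<le> dist x0 y}"
  define w where "w = (\<lambda>y. \<bar>indicator E1 y *\<^sub>R F y\<bar> + Lb * (indicator {y. norm (x0 - y) < \<epsilon>1} y * norm (x0 - y) powr (-(p - 2))))"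
  have FE1: "set_integrable lborel E1 F"
    unfolding E1_def F_def by (rule F_integrable[OF pN e1(1) vb L2[folded p_def]])
  have wi: "integrable lborel w"
    unfolding w_def using FE1 unfolding set_integrable_def
    by (intro Bochner_Integration.integrable_add Bochner_Integration.integrable_mult_right integrable_abs local_integrable p2 e1(1))
  define st where "st = (\<lambda>t::real. \<lambda>y. indicator {y. inverse t \<le> dist x0 y} y *\<^sub>R F y)"
  have conv: "((\<lambda>t. integral\<^sup>L lborel (st t)) \<longlongrightarrow> integral\<^sup>L lborel F) at_top"
  proof (rule integral_dominated_convergence_at_top[where w = w])
    show "F \<in> borel_measurable lborel" by simp
    show "st t \<in> borel_measurable lborel" for t unfolding st_def by measurable
    show "integrable lborel w" by (rule wi)
    show "AE y in lborel. ((\<lambda>t. st t y) \<longlongrightarrow> F y) at_top"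
      using AE_lborel_singleton[of x0]
    proof eventually_elim
      fix y :: 'a assume y: "y \<noteq> x0"
      then have d: "dist x0 y > 0" by simp
      have "eventually (\<lambda>t. st t y = F y) at_top"
      proof (rule eventually_at_top_linorderI[of "inverse (dist x0 y)"])
        fix t assume "inverse (dist x0 y) \<le> t"
        then have "inverse t \<le> dist x0 y" using d
          by (metis inverse_inverse_eq inverse_le_imp_le inverse_positive_iff_positive)
        then show "st t y = F y" unfolding st_def by simp
      qed
      then show "((\<lambda>t. st t y) \<longlongrightarrow> F y) at_top" by (rule tendsto_eventually)
    qed
    show "\<forall>\<^sub>F t in at_top. AE y in lborel. norm (st t y) \<le> w y"
    proof (intro always_eventually allI AE_I2)
      fix t :: real and y :: 'a
      have w0: "0 \<le> Lb * (indicator {y. norm (x0 - y) < \<epsilon>1} y * norm (x0 - y) powr (-(p - 2)))"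
        using Lb(1) by simp
      have "norm (F y) \<le> w y"
      proof (cases "\<epsilon>1 \<le> dist x0 y")
        case True then show ?thesis unfolding w_def E1_def using w0 by simp
      next
        case False
        show ?thesis
        proof (cases "y = x0")
          case True then show ?thesis unfolding w_def F_def using w0 by simp
        next
          case yne: False
          define d where "d = norm (x0 - y)"
          have d0: "d > 0" unfolding d_def using yne by simp
          have yb: "y \<in> ball x0 \<epsilon>1" using False by simp
          have vy: "v x0 \<le> v y" using m(2) ballB yb by auto
          have "norm (F y) = (v y - v x0) / d powr p" unfolding F_def d_def using vy by simp
          also have "\<dots> \<le> Lb * d^2 / d powr p"
            using Lb(2) yb d0 unfolding d_def by (intro divide_right_mono) (auto simp: norm_minus_commute)
          also have "\<dots> = Lb * d powr (-(p - 2))"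
          proof -
            have "d powr (real 2) = d^2" using d0 by (rule powr_realpow)
            then have "d^2 = d powr 2" by simp
            moreover have "d powr 2 / d powr p = d powr (2 - p)" by (rule powr_diff[symmetric])
            ultimately show ?thesis by (simp only: times_divide_eq_right[symmetric] minus_diff_eq)
          qed
          finally have "norm (F y) \<le> Lb * (indicator {y. norm (x0 - y) < \<epsilon>1} y * norm (x0 - y) powr (-(p - 2)))"
            using False unfolding d_def by (simp add: dist_norm)
          then show ?thesis unfolding w_def by simp
        qed
      qed
      then show "norm (st t y) \<le> w y" unfolding st_def w_def by (auto simp: indicator_def)
    qed
  qed
  have "(I \<longlongrightarrow> integral\<^sup>L lborel F) (at_right 0)"
    unfolding filterlim_at_right_to_top
  proof -
    have "(\<lambda>t. I (inverse t)) = (\<lambda>t. integral\<^sup>L lborel (st t))"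
      unfolding I_def st_def set_lebesgue_integral_def F_def p_def by simp
    then show "((\<lambda>t. I (inverse t)) \<longlongrightarrow> integral\<^sup>L lborel F) at_top" using conv by simp
  qed
  then have lim: "Lim (at_right 0) I = integral\<^sup>L lborel F" by (intro tendsto_Lim) simp_all
  have "integral\<^sup>L lborel F \<le> bd"
  proof (rule tendsto_upperbound[OF \<open>(I \<longlongrightarrow> integral\<^sup>L lborel F) (at_right 0)\<close>])
    show "\<not> trivial_limit (at_right (0::real))" by simp
    show "\<forall>\<^sub>F \<epsilon> in at_right 0. I \<epsilon> \<le> bd"
    proof (rule eventually_at_rightI[of 0 "\<epsilon>1"])
      fix \<epsilon> assume "\<epsilon> \<in> {0<..<\<epsilon>1}"
      then have e: "0 < \<epsilon>" "\<epsilon> < lam - norm x0" "\<forall>y\<in>ball x0 \<epsilon>. v y \<le> 0" using e1 by auto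
      show "I \<epsilon> \<le> bd"
        unfolding I_def bd_def by (rule key_bound[OF lam s(1) N vb L2 anti sph x0 m e])
    qed (use e1 in simp)
  qed
  moreover have "frac_const DIM('a) s > 0" by (rule frac_const_pos[OF s])
  ultimately have "frac_const DIM('a) s * Lim (at_right 0) I \<le> frac_const DIM('a) s * bd"
    unfolding lim by simp
  then show ?thesis unfolding frac_lap_def I_def bd_def .
qed

lemma neg_nbhd:
  fixes v :: "'a::euclidean_space \<Rightarrow> real"
  assumes "isCont v x" "v x < 0"
  shows "\<exists>r>0. \<forall>y\<in>ball x r. v y < 0"
proof -
  have "eventually (\<lambda>y. v y < 0) (at x)"
    using order_tendstoD(2)[OF assms(1)[unfolded isCont_def] assms(2)] .
  then obtain d where d: "d > 0" "\<forall>y. y \<noteq> x \<and> dist y x < d \<longrightarrow> v y < 0"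
    unfolding eventually_at by auto
  show ?thesis
    using d assms(2) by (intro exI[of _ d]) (auto simp: dist_commute)
qed

lemma sphere_zero:
  fixes v :: "'a::euclidean_space \<Rightarrow> real"
  assumes vc: "continuous_on UNIV v" and lam: "lam > 0"
    and anti: "\<forall>x\<in>ball 0 lam - {0}. v x = - kelvin s lam v x"
    and y: "norm y = lam"
  shows "v y = 0"
proof -
  let ?h = "\<lambda>z. v z + kelvin s lam v z"
  have y0: "y \<noteq> 0" using y lam by auto
  have "continuous_on (UNIV - {0}) (kelvin s lam v)"
    unfolding kelvin_def
    by (intro continuous_intros continuous_on_compose2[OF vc]) (use lam in auto)
  then have "isCont (kelvin s lam v) y"
    using y0 by (simp add: continuous_on_eq_continuous_at open_Diff)
  moreover have "isCont v y" using vc by (simp add: continuous_on_eq_continuous_at)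
  ultimately have hc: "isCont ?h y" by (intro continuous_intros)
  define Y where "Y = (\<lambda>n. (1 - inverse (real (Suc (Suc n)))) *\<^sub>R y)"
  have "(\<lambda>n. 1 - inverse (real (Suc (Suc n)))) \<longlonglongrightarrow> 1 - 0"
    by (intro tendsto_intros LIMSEQ_Suc[OF LIMSEQ_inverse_real_of_nat])
  then have "Y \<longlonglongrightarrow> (1 - 0) *\<^sub>R y" unfolding Y_def by (intro tendsto_scaleR tendsto_const)
  then have "(\<lambda>n. ?h (Y n)) \<longlonglongrightarrow> ?h y" by (intro isCont_tendsto_compose[OF hc]) simp
  moreover have "?h (Y n) = 0" for n
  proof -
    have i: "0 < inverse (real (Suc (Suc n)))" "inverse (real (Suc (Suc n))) < 1" by (auto simp: field_simps)
    then have "norm (Y n) = (1 - inverse (real (Suc (Suc n)))) * lam" unfolding Y_def using y by simp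
    then have "Y n \<in> ball 0 lam - {0}" using i lam by (auto simp: mult_less_cancel_right2)
    then show ?thesis using anti by simp
  qed
  ultimately have "?h y = 0" by (simp add: LIMSEQ_const_iff)
  moreover have "kelvin s lam v y = v y" unfolding kelvin_def using y lam by (simp add: power2_eq_square)
  ultimately show ?thesis by simp
qed


theorem lemma3p1:
  fixes s \<alpha> C lam :: real
  assumes "0 < s" "s < 1" "real DIM('a::euclidean_space) > 2 * s"
    and "\<alpha> > -2 * s" "C > 0" "lam > 0"
  shows "\<exists>\<delta>0>0. \<forall>(v::'a \<Rightarrow> real) \<Omega>.
     v \<in> L2s s \<and> v \<in> C11_loc \<and>
     (\<forall>x\<in>ball 0 lam - {0}. v x = - kelvin s lam v x) \<and>
     \<Omega> \<subseteq> ball 0 lam - {0} \<and>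
     (\<forall>x\<in>\<Omega>. frac_lap s v x - C * norm x powr \<alpha> * v x \<ge> 0) \<and>
     (\<forall>x\<in>(ball 0 lam - {0}) - \<Omega>. v x \<ge> 0) \<and>
     \<Omega> \<subseteq> {x. lam - \<delta>0 < norm x \<and> norm x < lam}
     \<longrightarrow> (\<forall>x\<in>\<Omega>. v x \<ge> 0)"
proof -
  note s = assms(1,2) and N = assms(3) and Cp = assms(5) and lam = assms(6)
  define p where "p = real DIM('a) + 2 * s"
  define A where "A = frac_const DIM('a) s"
  define V where "V = measure lborel (ball (0::'a) 1)"
  define M where "M = C * max (lam powr \<alpha>) ((lam / 2) powr \<alpha>)"
  define X where "X = A * V * 3 powr (-p) / M"
  define \<delta>0 where "\<delta>0 = min (lam / 2) (X powr (1 / (2 * s)))"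
  have A0: "A > 0" unfolding A_def by (rule frac_const_pos[OF s])
  have V0: "V > 0" unfolding V_def by (rule content_ball_pos) simp
  have M0: "M > 0" unfolding M_def using Cp lam by (intro mult_pos_pos) (auto simp: max_def)
  have X0: "X > 0" unfolding X_def using A0 V0 M0 by simp
  have d0: "\<delta>0 > 0" unfolding \<delta>0_def using lam X0 by simp
  show ?thesis
  proof (intro exI[of _ \<delta>0] conjI allI impI d0)
    fix v :: "'a \<Rightarrow> real" and \<Omega> :: "'a set"
    assume H: "v \<in> L2s s \<and> v \<in> C11_loc \<and>
     (\<forall>x\<in>ball 0 lam - {0}. v x = - kelvin s lam v x) \<and>
     \<Omega> \<subseteq> ball 0 lam - {0} \<and>
     (\<forall>x\<in>\<Omega>. frac_lap s v x - C * norm x powr \<alpha> * v x \<ge> 0) \<and>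
     (\<forall>x\<in>(ball 0 lam - {0}) - \<Omega>. v x \<ge> 0) \<and>
     \<Omega> \<subseteq> {x. lam - \<delta>0 < norm x \<and> norm x < lam}"
    have L2: "v \<in> L2s s" and vC: "v \<in> C11_loc"
      and anti: "\<forall>x\<in>ball 0 lam - {0}. v x = - kelvin s lam v x"
      and OB: "\<Omega> \<subseteq> ball 0 lam - {0}"
      and eq: "\<forall>x\<in>\<Omega>. frac_lap s v x - C * norm x powr \<alpha> * v x \<ge> 0"
      and pos: "\<forall>x\<in>(ball 0 lam - {0}) - \<Omega>. v x \<ge> 0"
      and narrow: "\<Omega> \<subseteq> {x. lam - \<delta>0 < norm x \<and> norm x < lam}" using H by blast+
    show "\<forall>x\<in>\<Omega>. v x \<ge> 0"
    proof (rule ccontr)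
      assume "\<not> (\<forall>x\<in>\<Omega>. v x \<ge> 0)"
      then obtain x1 where x1: "x1 \<in> \<Omega>" "v x1 < 0" by auto
      obtain D where "\<And>x. (v has_derivative (\<lambda>h. D x \<bullet> h)) (at x)"
        using vC unfolding C11_loc_def by blast
      then have vcont: "continuous_on UNIV v"
        by (intro continuous_at_imp_continuous_on ballI has_derivative_continuous) blast
      have isc: "isCont v x" for x using vcont by (simp add: continuous_on_eq_continuous_at)
      have vb: "v \<in> borel_measurable borel" by (rule borel_measurable_continuous_onI[OF vcont])
      have L2': "integrable lborel (\<lambda>x. v x / (1 + norm x powr (real DIM('a) + 2 * s)))"
        using L2 unfolding L2s_def by simp
      have sph: "\<forall>y. norm y = lam \<longrightarrow> v y = 0"
        using sphere_zero[OF vcont lam anti] by blast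
      obtain x0 where x0c: "x0 \<in> cball 0 lam" and x0min: "\<forall>y\<in>cball 0 lam. v x0 \<le> v y"
      proof -
        have "continuous_on (cball 0 lam) v" using vcont by (rule continuous_on_subset) simp
        then have "\<exists>x\<in>cball 0 lam. \<forall>y\<in>cball 0 lam. v x \<le> v y"
          using lam by (intro continuous_attains_inf) auto
        then show ?thesis using that by blast
      qed
      have x1b: "x1 \<in> cball 0 lam" using x1 OB by auto
      have m: "v x0 < 0" using x0min x1b x1 by force
      have x0l: "norm x0 < lam"
      proof -
        have "norm x0 \<noteq> lam" using sph m by auto
        then show ?thesis using x0c by simp
      qed
      have x0ne: "x0 \<noteq> 0"
      proof
        assume z: "x0 = 0"
        obtain r where r: "r > 0" "\<forall>y\<in>ball x0 r. v y < 0" using neg_nbhd[OF isc m] by blast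
        obtain b :: 'a where b: "b \<in> Basis" using nonempty_Basis by blast
        define t where "t = min (r / 2) (lam / 2)"
        have t0: "t > 0" unfolding t_def using r lam by simp
        have nb: "norm (t *\<^sub>R b) = t" using b t0 by simp
        have tr: "t < r" unfolding t_def using r by simp
        have "t *\<^sub>R b \<in> ball x0 r" using nb z tr by (simp add: dist_norm)
        then have neg: "v (t *\<^sub>R b) < 0" using r by blast
        have "t *\<^sub>R b \<in> ball 0 lam - {0}" using nb t0 lam unfolding t_def by auto
        then have "t *\<^sub>R b \<in> \<Omega>"
        proof (rule contrapos_pp)
          assume "t *\<^sub>R b \<notin> \<Omega>"
          then have "t *\<^sub>R b \<in> ball 0 lam - {0} - \<Omega>" using \<open>t *\<^sub>R b \<in> ball 0 lam - {0}\<close> by blast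
          then have "0 \<le> v (t *\<^sub>R b)" using pos by blast
          with neg show "t *\<^sub>R b \<notin> ball 0 lam - {0}" by simp
        qed
        then have "lam - \<delta>0 < t" using narrow nb by auto
        moreover have "t \<le> lam / 2" "\<delta>0 \<le> lam / 2" unfolding t_def \<delta>0_def by auto
        ultimately show False by simp
      qed
      have x0O: "x0 \<in> \<Omega>"
      proof (rule ccontr)
        assume "x0 \<notin> \<Omega>"
        then have "x0 \<in> ball 0 lam - {0} - \<Omega>" using x0l x0ne by simp
        then have "0 \<le> v x0" using pos by blast
        with m show False by simp
      qed
      define \<rho> where "\<rho> = lam - norm x0"
      have nx0: "lam - \<delta>0 < norm x0" using narrow x0O by auto
      have r0: "\<rho> > 0" unfolding \<rho>_def using x0l by simp
      have rd: "\<rho> < \<delta>0" unfolding \<rho>_def using nx0 by simp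
      have x02: "lam < 2 * norm x0" using nx0 unfolding \<delta>0_def by simp
      obtain r where r: "r > 0" "\<forall>y\<in>ball x0 r. v y < 0" using neg_nbhd[OF isc m] by blast
      define \<epsilon>1 where "\<epsilon>1 = min r (\<rho> / 2)"
      have e1: "0 < \<epsilon>1" "\<epsilon>1 < lam - norm x0" "\<forall>y\<in>ball x0 \<epsilon>1. v y \<le> 0"
      proof -
        show "0 < \<epsilon>1" unfolding \<epsilon>1_def using r r0 by simp
        have "\<epsilon>1 \<le> \<rho> / 2" unfolding \<epsilon>1_def by simp
        then show "\<epsilon>1 < lam - norm x0" using r0 unfolding \<rho>_def by simp
        show "\<forall>y\<in>ball x0 \<epsilon>1. v y \<le> 0" unfolding \<epsilon>1_def using r by (auto simp: less_imp_le)
      qed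
      have mB: "\<forall>y\<in>ball 0 lam. v x0 \<le> v y" using x0min by auto
      have fb: "frac_lap s v x0 \<le> A * (v x0 * (3 * \<rho>) powr (-p) * measure lborel (ball x0 \<rho>))"
        unfolding A_def p_def \<rho>_def
        by (rule frac_lap_bound[OF lam s N vC vb L2' anti sph x0l x02 m mB e1])
      have meas: "measure lborel (ball x0 \<rho>) = \<rho> ^ DIM('a) * V"
        unfolding V_def using content_ball_conv_unit_ball[of \<rho> x0] r0 by simp
      have W: "(3 * \<rho>) powr (-p) * (\<rho> ^ DIM('a)) = 3 powr (-p) * \<rho> powr (-(2 * s))"
      proof -
        have "\<rho> ^ DIM('a) = \<rho> powr (real DIM('a))" using r0 by (simp add: powr_realpow)
        moreover have "(3 * \<rho>) powr (-p) = 3 powr (-p) * \<rho> powr (-p)" using r0 by (simp add: powr_mult)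
        ultimately show ?thesis unfolding p_def by (simp add: powr_add[symmetric] mult_ac)
      qed
      have hyp: "frac_lap s v x0 - C * norm x0 powr \<alpha> * v x0 \<ge> 0" using eq x0O by blast
      have "C * norm x0 powr \<alpha> * v x0 \<le> A * (v x0 * ((3 * \<rho>) powr (-p) * \<rho> ^ DIM('a) * V))"
        using hyp fb meas by (simp add: mult_ac)
      then have "v x0 * (C * norm x0 powr \<alpha>) \<le> v x0 * (A * (3 * \<rho>) powr (-p) * \<rho> ^ DIM('a) * V)"
        by (simp add: mult_ac)
      then have ineq: "A * ((3 * \<rho>) powr (-p) * \<rho> ^ DIM('a)) * V \<le> C * norm x0 powr \<alpha>"
        using m by (simp add: mult_le_cancel_left mult_ac)
      have "norm x0 powr \<alpha> \<le> max (lam powr \<alpha>) ((lam / 2) powr \<alpha>)"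
      proof (cases "\<alpha> \<ge> 0")
        case True
        then have "norm x0 powr \<alpha> \<le> lam powr \<alpha>" using x0l by (intro powr_mono2) auto
        then show ?thesis by simp
      next
        case False
        then have "norm x0 powr \<alpha> \<le> (lam / 2) powr \<alpha>" using x02 lam by (intro powr_mono2') auto
        then show ?thesis by simp
      qed
      then have "C * norm x0 powr \<alpha> \<le> M" unfolding M_def using Cp by simp
      with ineq W have "A * V * 3 powr (-p) * \<rho> powr (-(2 * s)) \<le> M" by (simp add: mult_ac)
      then have "A * V * 3 powr (-p) \<le> M * \<rho> powr (2 * s)"
        using r0 by (simp add: powr_minus field_simps)
      also have "\<dots> < M * \<delta>0 powr (2 * s)"
        using M0 rd r0 s by (intro mult_strict_left_mono powr_less_mono2) auto
      also have "\<delta>0 powr (2 * s) \<le> (X powr (1 / (2 * s))) powr (2 * s)"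
        unfolding \<delta>0_def using d0 s by (intro powr_mono2) (auto simp: \<delta>0_def)
      also have "(X powr (1 / (2 * s))) powr (2 * s) = X" using s X0 by (simp add: powr_powr)
      finally have "A * V * 3 powr (-p) < M * X" using M0 by simp
      then show False unfolding X_def using M0 by simp
    qed
  qed
qed

end
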